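(* Let $r\ge2$ and let $\mu_1,\dots,\mu_r$, $P_{\vec n}$, the nearest neighbor recurrence coefficients $a_{\vec n,j},b_{\vec n,j}$ and the marginal recurrence coefficients $a_n^2(\mu_i),b_n(\mu_i)$ be as in the context. Suppose that $b_{\vec n,i}\ne b_{\vec n,j}$ for all $\vec n\in\mathbb{N}^r$ and all $1\le i\ne j\le r$. Then the nearest neighbor recurrence coefficients $a_{\vec n,j},b_{\vec n,j}$ ($\vec n\in\mathbb{N}^r$, $1\le j\le r$) can be computed (recursively in $|\vec n|$) from the relations, valid for all $1\le i\ne j\le r$, \begin{align*} b_{\vec n+\vec e_i,j}-b_{\vec n,j} &= b_{\vec n+\vec e_j,i}-b_{\vec n,i},\\ \sum_{k=1}^r a_{\vec n+\vec e_j,k}-\sum_{k=1}^r a_{\vec n+\vec e_i,k} &= b_{\vec n+\vec e_j,i}\,b_{\vec n,j}-b_{\vec n,i}\,b_{\vec n+\vec e_i,j},\\ \frac{a_{\vec n+\vec e_j,i}}{a_{\vec n,i}} &= \frac{b_{\vec n,j}-b_{\vec n,i}}{b_{\vec n-\vec e_i,j}-b_{\vec n-\vec e_i,i}} \quad(\text{when } n_i\ge1), \end{align*} and the boundary conditions $a_{n\vec e_j,j}=a_n^2(\mu_j)$, $b_{n\vec e_j,j}=b_n(\mu_j)$ for $n\ge0$, $1\le j\le r$ (with $a_0^2(\mu_j)=0$), and $a_{n\vec e_i,j}=0$ for $n\ge0$, $i\ne j$; i.e. these relations and boundary conditions determine all nearest neighbor recurrence coefficients uniquely.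
   Context: Let $\mu_1,\dots,\mu_r$ be positive Borel measures on $\mathbb{R}$ with all moments finite, forming a normal system: for every multi-index $\vec n=(n_1,\dots,n_r)\in\mathbb{N}^r$ there is a unique monic polynomial $P_{\vec n}$ of degree $|\vec n|=n_1+\dots+n_r$ with $\int x^kP_{\vec n}(x)\,d\mu_j(x)=0$ for $0\le k\le n_j-1$, $1\le j\le r$. Set $P_{\vec n}=0$ if some component of $\vec n$ is negative; $\vec e_1,\dots,\vec e_r$ are the standard unit vectors. The nearest neighbor recurrence relations are \[ xP_{\vec n}(x)=P_{\vec n+\vec e_k}(x)+b_{\vec n,k}P_{\vec n}(x)+\sum_{j=1}^r a_{\vec n,j}P_{\vec n-\vec e_j}(x),\qquad 1\le k\le r, \] defining the real numbers $a_{\vec n,j},b_{\vec n,k}$, with the convention $a_{\vec n,j}=0$ whenever $n_j=0$ (such coefficients multiply the zero polynomial). For each $i$, $P_n(x;\mu_i)$ are the monic orthogonal polynomials for $\mu_i$, with $xP_n(x;\mu_i)=P_{n+1}(x;\mu_i)+b_n(\mu_i)P_n(x;\mu_i)+a_n^2(\mu_i)P_{n-1}(x;\mu_i)$, $P_0=1$, $P_{-1}=0$. The three displayed relations in the claim are known to hold for the nearest neighbor recurrence coefficients. *)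

theory Defs
  imports "HOL-Analysis.Analysis" "HOL-Computational_Algebra.Polynomial"
begin

text \<open>Multi-indices in N^r are functions nat => nat supported on {1..r}.\<close>

definition MI :: "nat \<Rightarrow> (nat \<Rightarrow> nat) set" where
  "MI r = {n. \<forall>k. k \<notin> {1..r} \<longrightarrow> n k = 0}"

definition unitv :: "nat \<Rightarrow> nat \<Rightarrow> nat" ("\<ee>") where
  "\<ee> k = (\<lambda>i. if i = k then 1 else 0)"

definition addv :: "(nat \<Rightarrow> nat) \<Rightarrow> (nat \<Rightarrow> nat) \<Rightarrow> (nat \<Rightarrow> nat)" where
  "addv n m = (\<lambda>i. n i + m i)"

definition scalev :: "nat \<Rightarrow> (nat \<Rightarrow> nat) \<Rightarrow> (nat \<Rightarrow> nat)" where
  "scalev c m = (\<lambda>i. c * m i)"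

text \<open>n - e_i (used only when n_i >= 1).\<close>
definition decv :: "(nat \<Rightarrow> nat) \<Rightarrow> nat \<Rightarrow> (nat \<Rightarrow> nat)" where
  "decv n i = n(i := n i - 1)"

definition absv :: "nat \<Rightarrow> (nat \<Rightarrow> nat) \<Rightarrow> nat" where
  "absv r n = (\<Sum>k\<in>{1..r}. n k)"

definition moment_measure :: "real measure \<Rightarrow> bool" where
  "moment_measure M \<longleftrightarrow> sets M = sets borel \<and> (\<forall>k::nat. integrable M (\<lambda>x. x ^ k))"

definition is_MOP :: "nat \<Rightarrow> (nat \<Rightarrow> real measure) \<Rightarrow> (nat \<Rightarrow> nat) \<Rightarrow> real poly \<Rightarrow> bool" where
  "is_MOP r \<mu> n p \<longleftrightarrow> lead_coeff p = 1 \<and> degree p = absv r n \<and>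
     (\<forall>j\<in>{1..r}. \<forall>k<n j. (\<integral>x. x ^ k * poly p x \<partial>\<mu> j) = 0)"

definition normal_system :: "nat \<Rightarrow> (nat \<Rightarrow> real measure) \<Rightarrow> bool" where
  "normal_system r \<mu> \<longleftrightarrow> (\<forall>n\<in>MI r. \<exists>!p. is_MOP r \<mu> n p)"

definition MOP :: "nat \<Rightarrow> (nat \<Rightarrow> real measure) \<Rightarrow> (nat \<Rightarrow> nat) \<Rightarrow> real poly" where
  "MOP r \<mu> n = (THE p. is_MOP r \<mu> n p)"

definition MOP_dec :: "nat \<Rightarrow> (nat \<Rightarrow> real measure) \<Rightarrow> (nat \<Rightarrow> nat) \<Rightarrow> nat \<Rightarrow> real poly" where
  "MOP_dec r \<mu> n j = (if n j = 0 then 0 else MOP r \<mu> (decv n j))"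

definition is_OP :: "real measure \<Rightarrow> nat \<Rightarrow> real poly \<Rightarrow> bool" where
  "is_OP M n p \<longleftrightarrow> lead_coeff p = 1 \<and> degree p = n \<and>
     (\<forall>k<n. (\<integral>x. x ^ k * poly p x \<partial>M) = 0)"

definition OP :: "real measure \<Rightarrow> nat \<Rightarrow> real poly" where
  "OP M n = (THE p. is_OP M n p)"

definition NN_rec :: "nat \<Rightarrow> (nat \<Rightarrow> real measure) \<Rightarrow> ((nat \<Rightarrow> nat) \<Rightarrow> nat \<Rightarrow> real)
    \<Rightarrow> ((nat \<Rightarrow> nat) \<Rightarrow> nat \<Rightarrow> real) \<Rightarrow> bool" where
  "NN_rec r \<mu> a b \<longleftrightarrow>
     (\<forall>n\<in>MI r. \<forall>j\<in>{1..r}. n j = 0 \<longrightarrow> a n j = 0) \<and>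
     (\<forall>n\<in>MI r. \<forall>k\<in>{1..r}. \<forall>x::real.
        x * poly (MOP r \<mu> n) x = poly (MOP r \<mu> (addv n (\<ee> k))) x + b n k * poly (MOP r \<mu> n) x
          + (\<Sum>j\<in>{1..r}. a n j * poly (MOP_dec r \<mu> n j) x))"

definition TT_rec :: "real measure \<Rightarrow> (nat \<Rightarrow> real) \<Rightarrow> (nat \<Rightarrow> real) \<Rightarrow> bool" where
  "TT_rec M a2 b \<longleftrightarrow> (\<forall>n. \<forall>x::real.
     x * poly (OP M n) x = poly (OP M (Suc n)) x + b n * poly (OP M n) x
       + a2 n * (if n = 0 then 0 else poly (OP M (n - 1)) x))"

definition relations_bc :: "nat \<Rightarrow> (nat \<Rightarrow> nat \<Rightarrow> real) \<Rightarrow> (nat \<Rightarrow> nat \<Rightarrow> real)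
    \<Rightarrow> ((nat \<Rightarrow> nat) \<Rightarrow> nat \<Rightarrow> real) \<Rightarrow> ((nat \<Rightarrow> nat) \<Rightarrow> nat \<Rightarrow> real) \<Rightarrow> bool" where
  "relations_bc r a2\<mu> b\<mu> a b \<longleftrightarrow>
     (\<forall>n\<in>MI r. \<forall>i\<in>{1..r}. \<forall>j\<in>{1..r}. i \<noteq> j \<longrightarrow>
        b (addv n (\<ee> i)) j - b n j = b (addv n (\<ee> j)) i - b n i \<and>
        (\<Sum>k\<in>{1..r}. a (addv n (\<ee> j)) k) - (\<Sum>k\<in>{1..r}. a (addv n (\<ee> i)) k)
          = b (addv n (\<ee> j)) i * b n j - b n i * b (addv n (\<ee> i)) j \<and>
        (1 \<le> n i \<longrightarrow> a (addv n (\<ee> j)) i / a n i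
          = (b n j - b n i) / (b (decv n i) j - b (decv n i) i))) \<and>
     (\<forall>m::nat. \<forall>j\<in>{1..r}.
        a (scalev m (\<ee> j)) j = (if m = 0 then 0 else a2\<mu> j m) \<and>
        b (scalev m (\<ee> j)) j = b\<mu> j m) \<and>
     (\<forall>m::nat. \<forall>i\<in>{1..r}. \<forall>j\<in>{1..r}. i \<noteq> j \<longrightarrow> a (scalev m (\<ee> i)) j = 0)"

end

theory Submission
  imports Defs
begin


lemma addv_apply: "addv n (\<ee> k) i = n i + (if i = k then 1 else 0)"
  by (simp add: addv_def unitv_def)

lemma MI_addv: "n \<in> MI r \<Longrightarrow> k \<in> {1..r} \<Longrightarrow> addv n (\<ee> k) \<in> MI r"
  by (auto simp: MI_def addv_apply)

lemma MI_decv: "n \<in> MI r \<Longrightarrow> decv n i \<in> MI r"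
  by (auto simp: MI_def decv_def)

lemma MI_scalev: "k \<in> {1..r} \<Longrightarrow> scalev s (\<ee> k) \<in> MI r"
  by (auto simp: MI_def scalev_def unitv_def)

lemma addv_decv: "1 \<le> n i \<Longrightarrow> addv (decv n i) (\<ee> i) = n"
  by (auto simp: addv_def decv_def unitv_def)

lemma decv_addv: "decv (addv n (\<ee> i)) i = n"
  by (auto simp: addv_def decv_def unitv_def)

lemma decv_addv_other: "i \<noteq> j \<Longrightarrow> decv (addv n (\<ee> j)) i = addv (decv n i) (\<ee> j)"
  by (auto simp: addv_def decv_def unitv_def)

lemma decv_apply_other: "i \<noteq> j \<Longrightarrow> decv n i j = n j"
  by (auto simp: decv_def)

lemma decv_apply_same: "decv n i i = n i - 1"
  by (auto simp: decv_def)

lemma addv_comm: "addv (addv n (\<ee> i)) (\<ee> j) = addv (addv n (\<ee> j)) (\<ee> i)"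
  by (auto simp: addv_def)

lemma absv_addv: "k \<in> {1..r} \<Longrightarrow> absv r (addv n (\<ee> k)) = absv r n + 1"
  by (simp add: absv_def addv_apply sum.distrib)

lemma absv_decv: "1 \<le> n i \<Longrightarrow> i \<in> {1..r} \<Longrightarrow> absv r n = absv r (decv n i) + 1"
  by (metis absv_addv addv_decv)

lemma scalev_apply: "scalev s (\<ee> k) i = (if i = k then s else 0)"
  by (simp add: scalev_def unitv_def)

lemma absv_scalev: "k \<in> {1..r} \<Longrightarrow> absv r (scalev s (\<ee> k)) = s"
  by (simp add: absv_def scalev_apply)

lemma pure: "n \<in> MI r \<Longrightarrow> (\<forall>i\<in>{1..r}. i \<noteq> j \<longrightarrow> n i = 0) \<Longrightarrow> n = scalev (n j) (\<ee> j)"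
  by (rule ext) (auto simp: scalev_apply MI_def)

lemma relsD:
  assumes "relations_bc r a2 b2 a b" "n \<in> MI r" "i \<in> {1..r}" "j \<in> {1..r}" "i \<noteq> j"
  shows "b (addv n (\<ee> i)) j - b n j = b (addv n (\<ee> j)) i - b n i"
    "(\<Sum>k\<in>{1..r}. a (addv n (\<ee> j)) k) - (\<Sum>k\<in>{1..r}. a (addv n (\<ee> i)) k)
          = b (addv n (\<ee> j)) i * b n j - b n i * b (addv n (\<ee> i)) j"
    "1 \<le> n i \<Longrightarrow> a (addv n (\<ee> j)) i / a n i
          = (b n j - b n i) / (b (decv n i) j - b (decv n i) i)"
  using assms unfolding relations_bc_def by blast+

lemma bcD:
  assumes "relations_bc r a2 b2 a b" "j \<in> {1..r}"
  shows "a (scalev m (\<ee> j)) j = (if m = 0 then 0 else a2 j m)" "b (scalev m (\<ee> j)) j = b2 j m"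
  using assms unfolding relations_bc_def by blast+

lemma uniq:
  assumes conv: "\<forall>n\<in>MI r. \<forall>j\<in>{1..r}. n j = 0 \<longrightarrow> a n j = 0"
    and conv': "\<forall>n\<in>MI r. \<forall>j\<in>{1..r}. n j = 0 \<longrightarrow> a' n j = 0"
    and R: "relations_bc r a2 b2 a b" and R': "relations_bc r a2 b2 a' b'"
    and dist: "\<forall>n\<in>MI r. \<forall>i\<in>{1..r}. \<forall>j\<in>{1..r}. i \<noteq> j \<longrightarrow> b n i \<noteq> b n j"
  shows "\<forall>n\<in>MI r. \<forall>j\<in>{1..r}. a' n j = a n j \<and> b' n j = b n j"
proof -
  have main: "\<forall>n\<in>MI r. absv r n = N \<longrightarrow> (\<forall>j\<in>{1..r}. a' n j = a n j \<and> b' n j = b n j)" for N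
  proof (induction N rule: less_induct)
    case (less N)
    have IH: "\<And>n j. n \<in> MI r \<Longrightarrow> absv r n < N \<Longrightarrow> j \<in> {1..r} \<Longrightarrow> a' n j = a n j \<and> b' n j = b n j"
      using less by blast
    have Apart: "a' m k = a m k" if m: "m \<in> MI r" "absv r m = N" and k: "k \<in> {1..r}" for m k
    proof (cases "m k = 0")
      case True then show ?thesis using conv conv' m k by auto
    next
      case mk: False
      show ?thesis
      proof (cases "\<forall>i\<in>{1..r}. i \<noteq> k \<longrightarrow> m i = 0")
        case True
        then have "m = scalev (m k) (\<ee> k)" using pure m by blast
        then show ?thesis using bcD(1)[OF R k] bcD(1)[OF R' k] by metis
      next
        case False
        then obtain j where j: "j \<in> {1..r}" "j \<noteq> k" "m j \<noteq> 0" by blast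
        define n where "n = decv m j"
        have mn: "m = addv n (\<ee> j)" using j addv_decv n_def by (metis less_one not_le)
        have nMI: "n \<in> MI r" using MI_decv m n_def by blast
        have nN: "absv r n < N" using absv_addv[OF j(1)] m mn by simp
        have nk: "1 \<le> n k" using mk j n_def decv_apply_other[of j k] by (metis less_one not_le)
        define d where "d = decv n k"
        have dMI: "d \<in> MI r" using MI_decv nMI d_def by blast
        have dN: "absv r d < N" using absv_decv[of n k, OF nk k] nN d_def by simp
        have r3: "a m k / a n k = (b n j - b n k) / (b d j - b d k)"
          using relsD(3)[OF R nMI k j(1)] j nk mn d_def by auto
        have r3': "a' m k / a' n k = (b' n j - b' n k) / (b' d j - b' d k)"
          using relsD(3)[OF R' nMI k j(1)] j nk mn d_def by auto
        have e1: "a' n k = a n k" "b' n j = b n j" "b' n k = b n k" using IH nMI nN k j by auto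
        have e2: "b' d j = b d j" "b' d k = b d k" using IH dMI dN k j by auto
        have ne: "(b n j - b n k) / (b d j - b d k) \<noteq> 0"
          using dist nMI dMI j k by auto
        have ank: "a n k \<noteq> 0" using r3 ne by auto
        have "a' m k / a n k = a m k / a n k" using r3 r3' e1 e2 by simp
        then show ?thesis using ank by (simp add: divide_cancel_right)
      qed
    qed
    show ?case
    proof (intro ballI impI)
      fix m j assume m: "m \<in> MI r" "absv r m = N" and j: "j \<in> {1..r}"
      have "b' m j = b m j"
      proof (cases "\<forall>i\<in>{1..r}. i \<noteq> j \<longrightarrow> m i = 0")
        case True
        then have "m = scalev (m j) (\<ee> j)" using pure m by blast
        then show ?thesis using bcD(2)[OF R j] bcD(2)[OF R' j] by metis
      next
        case False
        then obtain i where i: "i \<in> {1..r}" "i \<noteq> j" "m i \<noteq> 0" by blast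
        define n where "n = decv m i"
        have mn: "m = addv n (\<ee> i)" using i addv_decv n_def by (metis less_one not_le)
        have nMI: "n \<in> MI r" using MI_decv m n_def by blast
        have nN: "absv r n < N" using absv_addv[OF i(1)] m mn by simp
        have e1: "b' n j = b n j" "b' n i = b n i" using IH nMI nN i j by auto
        have njMI: "addv n (\<ee> j) \<in> MI r" using MI_addv nMI j by blast
        have njN: "absv r (addv n (\<ee> j)) = N" using absv_addv i j m mn by simp
        have s1: "(\<Sum>k\<in>{1..r}. a' (addv n (\<ee> j)) k) = (\<Sum>k\<in>{1..r}. a (addv n (\<ee> j)) k)"
          using Apart[OF njMI njN] by simp
        have s2: "(\<Sum>k\<in>{1..r}. a' (addv n (\<ee> i)) k) = (\<Sum>k\<in>{1..r}. a (addv n (\<ee> i)) k)"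
          using Apart[OF m(1) m(2)] mn by simp
        define X where "X = b (addv n (\<ee> j)) i"
        define X' where "X' = b' (addv n (\<ee> j)) i"
        define Y where "Y = b m j"
        define Y' where "Y' = b' m j"
        have q1: "Y - b n j = X - b n i" using relsD(1)[OF R nMI i(1) j i(2)] mn X_def Y_def by simp
        have q1': "Y' - b n j = X' - b n i" using relsD(1)[OF R' nMI i(1) j i(2)] mn X'_def Y'_def e1 by simp
        have q2: "X * b n j - b n i * Y = X' * b n j - b n i * Y'"
          using relsD(2)[OF R nMI i(1) j i(2)] relsD(2)[OF R' nMI i(1) j i(2)] mn X_def Y_def X'_def Y'_def e1 s1 s2
          by simp
        have dn: "b n j - b n i \<noteq> 0" using dist nMI i j by auto
        have "(X - X') * (b n j - b n i) = 0"
        proof -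
          have "Y = X + (b n j - b n i)" "Y' = X' + (b n j - b n i)" using q1 q1' by auto
          then show ?thesis using q2 by algebra
        qed
        then have "X = X'" using dn by simp
        then show ?thesis using q1 q1' Y_def Y'_def by simp
      qed
      then show "a' m j = a m j \<and> b' m j = b m j" using Apart m j by blast
    qed
  qed
  show ?thesis using main by blast
qed



definition J :: "real measure \<Rightarrow> nat \<Rightarrow> real poly \<Rightarrow> real" where
  "J M k p = (\<integral>x. x ^ k * poly p x \<partial>M)"

lemma int_poly: assumes "moment_measure M" shows "integrable M (\<lambda>x. x ^ k * poly p x)"
proof -
  have e: "(\<lambda>x. x ^ k * poly p x) = (\<lambda>x. \<Sum>i\<le>degree p. coeff p i * x ^ (k + i))"
    by (rule ext) (simp add: poly_altdef sum_distrib_left power_add algebra_simps)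
  show ?thesis unfolding e
    using assms by (auto simp: moment_measure_def intro!: Bochner_Integration.integrable_sum integrable_mult_right)
qed

lemma J_add: "moment_measure M \<Longrightarrow> J M k (p + q) = J M k p + J M k q"
  unfolding J_def by (simp add: distrib_left int_poly)

lemma J_smult: "J M k (smult c p) = c * J M k p"
  unfolding J_def by (simp add: algebra_simps)

lemma J_zero: "J M k 0 = 0"
  unfolding J_def by simp

lemma J_pCons: "J M k (pCons 0 p) = J M (Suc k) p"
  unfolding J_def by (simp add: algebra_simps)

lemma J_sum: "moment_measure M \<Longrightarrow> J M k (\<Sum>l\<in>A. f l) = (\<Sum>l\<in>A. J M k (f l))"
  unfolding J_def by (simp add: poly_sum sum_distrib_left int_poly)



context
  fixes r :: nat and \<mu> :: "nat \<Rightarrow> real measure" and a b :: "(nat \<Rightarrow> nat) \<Rightarrow> nat \<Rightarrow> real"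
  assumes ms: "\<forall>i\<in>{1..r}. moment_measure (\<mu> i)"
    and ns: "normal_system r \<mu>"
    and nn: "NN_rec r \<mu> a b"
begin

abbreviation "P \<equiv> MOP r \<mu>"
definition "Ls n = (\<Sum>j\<in>{1..r}. smult (a n j) (MOP_dec r \<mu> n j))"

lemma isMOP: "n \<in> MI r \<Longrightarrow> is_MOP r \<mu> n (P n)"
  using ns unfolding normal_system_def MOP_def by (metis theI')

lemma MOP_uniq: "n \<in> MI r \<Longrightarrow> is_MOP r \<mu> n p \<Longrightarrow> p = P n"
  using ns isMOP unfolding normal_system_def by blast

lemma degP: "n \<in> MI r \<Longrightarrow> degree (P n) = absv r n"
  using isMOP unfolding is_MOP_def by blast

lemma lcP: "n \<in> MI r \<Longrightarrow> lead_coeff (P n) = 1"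
  using isMOP unfolding is_MOP_def by blast

lemma coeffP: "n \<in> MI r \<Longrightarrow> coeff (P n) (absv r n) = 1"
  using degP lcP by metis

lemma coeffP_high: "n \<in> MI r \<Longrightarrow> absv r n < k \<Longrightarrow> coeff (P n) k = 0"
  using degP by (simp add: coeff_eq_0)

lemma orth: "n \<in> MI r \<Longrightarrow> l \<in> {1..r} \<Longrightarrow> k < n l \<Longrightarrow> J (\<mu> l) k (P n) = 0"
  using isMOP unfolding is_MOP_def J_def by blast

lemma conv: "n \<in> MI r \<Longrightarrow> j \<in> {1..r} \<Longrightarrow> n j = 0 \<Longrightarrow> a n j = 0"
  using nn unfolding NN_rec_def by blast

lemma nn_poly: "n \<in> MI r \<Longrightarrow> k \<in> {1..r} \<Longrightarrow>
   pCons 0 (P n) = P (addv n (\<ee> k)) + smult (b n k) (P n) + Ls n"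
proof -
  assume n: "n \<in> MI r" and k: "k \<in> {1..r}"
  have "poly (pCons 0 (P n)) = poly (P (addv n (\<ee> k)) + smult (b n k) (P n) + Ls n)"
  proof
    fix x
    show "poly (pCons 0 (P n)) x = poly (P (addv n (\<ee> k)) + smult (b n k) (P n) + Ls n) x"
      using nn n k unfolding NN_rec_def Ls_def by (simp add: poly_sum)
  qed
  then show ?thesis by (simp add: poly_eq_poly_eq_iff)
qed

lemma MOP_dec_coeff:
  assumes n: "n \<in> MI r" and l: "l \<in> {1..r}"
  shows "coeff (MOP_dec r \<mu> n l) (absv r n) = 0"
    "coeff (MOP_dec r \<mu> n l) (absv r n - 1) = (if n l = 0 then 0 else 1)"
proof -
  show "coeff (MOP_dec r \<mu> n l) (absv r n) = 0"
  proof (cases "n l = 0")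
    case False
    then have "absv r n = absv r (decv n l) + 1" using absv_decv[of n l r] l by simp
    then show ?thesis using False MI_decv[OF n] coeffP_high unfolding MOP_dec_def by simp
  qed (simp add: MOP_dec_def)
  show "coeff (MOP_dec r \<mu> n l) (absv r n - 1) = (if n l = 0 then 0 else 1)"
  proof (cases "n l = 0")
    case False
    then have "absv r n - 1 = absv r (decv n l)" using absv_decv[of n l r] l by simp
    then show ?thesis using False MI_decv[OF n] coeffP unfolding MOP_dec_def by simp
  qed (simp add: MOP_dec_def)
qed

lemma Ls_coeff:
  assumes n: "n \<in> MI r"
  shows "coeff (Ls n) (absv r n) = 0" "coeff (Ls n) (absv r n - 1) = (\<Sum>j\<in>{1..r}. a n j)"
proof -
  show "coeff (Ls n) (absv r n) = 0" unfolding Ls_def coeff_sum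
    using MOP_dec_coeff(1)[OF n] by simp
  have "coeff (Ls n) (absv r n - 1) = (\<Sum>j\<in>{1..r}. a n j * (if n j = 0 then 0 else 1))"
    unfolding Ls_def coeff_sum using MOP_dec_coeff(2)[OF n] by simp
  also have "\<dots> = (\<Sum>j\<in>{1..r}. a n j)"
    using conv[OF n] by (intro sum.cong) auto
  finally show "coeff (Ls n) (absv r n - 1) = (\<Sum>j\<in>{1..r}. a n j)" .
qed

lemma rel12:
  assumes n: "n \<in> MI r" and i: "i \<in> {1..r}" and j: "j \<in> {1..r}" and ij: "i \<noteq> j"
  shows "b (addv n (\<ee> i)) j - b n j = b (addv n (\<ee> j)) i - b n i"
    "(\<Sum>k\<in>{1..r}. a (addv n (\<ee> j)) k) - (\<Sum>k\<in>{1..r}. a (addv n (\<ee> i)) k)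
          = b (addv n (\<ee> j)) i * b n j - b n i * b (addv n (\<ee> i)) j"
proof -
  define N where "N = absv r n"
  define ni where "ni = addv n (\<ee> i)"
  define nj where "nj = addv n (\<ee> j)"
  define Q where "Q = P (addv ni (\<ee> j))"
  have Q2: "Q = P (addv nj (\<ee> i))" unfolding Q_def ni_def nj_def by (simp add: addv_comm)
  have niMI: "ni \<in> MI r" and njMI: "nj \<in> MI r" using MI_addv n i j ni_def nj_def by auto
  have aN: "absv r ni = Suc N" "absv r nj = Suc N" using absv_addv i j N_def ni_def nj_def by auto
  define X where "X = b nj i"
  define Y where "Y = b ni j"
  have E1: "pCons 0 (P nj) = Q + smult X (P nj) + Ls nj" using nn_poly[OF njMI i] Q2 X_def by simp
  have E2: "pCons 0 (P ni) = Q + smult Y (P ni) + Ls ni" using nn_poly[OF niMI j] Q_def Y_def by simp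
  have E3: "pCons 0 (P n) = P nj + smult (b n j) (P n) + Ls n" using nn_poly[OF n j] nj_def by simp
  have E4: "pCons 0 (P n) = P ni + smult (b n i) (P n) + Ls n" using nn_poly[OF n i] ni_def by simp
  have D: "P nj = P ni + smult (b n i - b n j) (P n)"
  proof -
    have "P nj + smult (b n j) (P n) = P ni + smult (b n i) (P n)" using E3 E4 by simp
    then show ?thesis by (simp add: algebra_simps smult_diff_left)
  qed
  have DC: "pCons 0 (P nj) = pCons 0 (P ni) + smult (b n i - b n j) (pCons 0 (P n))"
    using D by simp
  define cj where "cj = coeff (P nj) N"
  define ci where "ci = coeff (P ni) N"
  define q where "q = coeff (pCons 0 (P n)) N"
  define u where "u = coeff (pCons 0 (P ni)) N"
  have c1: "coeff (P n) N = 1" using coeffP n N_def by simp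
  have c2: "coeff (P nj) (Suc N) = 1" "coeff (P ni) (Suc N) = 1" using coeffP[OF niMI] coeffP[OF njMI] aN by auto
  have e3: "q = cj + b n j" using arg_cong[OF E3, of "\<lambda>p. coeff p N"] c1 Ls_coeff(1)[OF n]
    unfolding q_def cj_def N_def by simp
  have e4: "q = ci + b n i" using arg_cong[OF E4, of "\<lambda>p. coeff p N"] c1 Ls_coeff(1)[OF n]
    unfolding q_def ci_def N_def by simp
  have e1: "cj = coeff Q (Suc N) + X" using arg_cong[OF E1, of "\<lambda>p. coeff p (Suc N)"] c2 Ls_coeff(1)[OF njMI] aN
    unfolding cj_def by simp
  have e2: "ci = coeff Q (Suc N) + Y" using arg_cong[OF E2, of "\<lambda>p. coeff p (Suc N)"] c2 Ls_coeff(1)[OF niMI] aN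
    unfolding ci_def by simp
  show r1: "b (addv n (\<ee> i)) j - b n j = b (addv n (\<ee> j)) i - b n i"
    using e1 e2 e3 e4 unfolding X_def Y_def ni_def nj_def by linarith
  have g: "coeff (pCons 0 (P nj)) N = u + (b n i - b n j) * q"
    using arg_cong[OF DC, of "\<lambda>p. coeff p N"] unfolding u_def q_def by (simp only: coeff_add coeff_smult)
  have f1: "u + (b n i - b n j) * q = coeff Q N + X * cj + (\<Sum>k\<in>{1..r}. a nj k)"
    using arg_cong[OF E1, of "\<lambda>p. coeff p N"] Ls_coeff(2)[OF njMI] aN
    unfolding cj_def g[symmetric] by simp
  have f2: "u = coeff Q N + Y * ci + (\<Sum>k\<in>{1..r}. a ni k)"
    using arg_cong[OF E2, of "\<lambda>p. coeff p N"] Ls_coeff(2)[OF niMI] aN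
    unfolding ci_def u_def by simp
  have "Y - b n j = X - b n i" using r1 X_def Y_def ni_def nj_def by simp
  then show "(\<Sum>k\<in>{1..r}. a (addv n (\<ee> j)) k) - (\<Sum>k\<in>{1..r}. a (addv n (\<ee> i)) k)
          = b (addv n (\<ee> j)) i * b n j - b n i * b (addv n (\<ee> i)) j"
    using f1 f2 e3 e4 unfolding X_def[symmetric] Y_def[symmetric] ni_def[symmetric] nj_def[symmetric]
    by algebra
qed

lemma Dlem:
  assumes n: "n \<in> MI r" and i: "i \<in> {1..r}" and j: "j \<in> {1..r}"
  shows "P (addv n (\<ee> j)) = P (addv n (\<ee> i)) + smult (b n i - b n j) (P n)"
proof -
  have "P (addv n (\<ee> j)) + smult (b n j) (P n) = P (addv n (\<ee> i)) + smult (b n i) (P n)"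
    using nn_poly[OF n i] nn_poly[OF n j] by simp
  then show ?thesis by (simp add: algebra_simps smult_diff_left)
qed

lemma mom: "i \<in> {1..r} \<Longrightarrow> moment_measure (\<mu> i)" using ms by blast

lemma Inz:
  assumes n: "n \<in> MI r" and i: "i \<in> {1..r}"
  shows "J (\<mu> i) (n i) (P n) \<noteq> 0"
proof
  assume z: "J (\<mu> i) (n i) (P n) = 0"
  define ni where "ni = addv n (\<ee> i)"
  have niMI: "ni \<in> MI r" using MI_addv n i ni_def by auto
  have dg: "degree (P n) < degree (P ni)" using degP[OF n] degP[OF niMI] absv_addv[OF i] ni_def by simp
  have "is_MOP r \<mu> ni (P n + P ni)"
    unfolding is_MOP_def
  proof (intro conjI ballI allI impI)
    show "lead_coeff (P n + P ni) = 1" using lead_coeff_add_le[OF dg] lcP[OF niMI] by simp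
    show "degree (P n + P ni) = absv r ni" using degree_add_eq_right[OF dg] degP[OF niMI] by simp
    fix l k assume l: "l \<in> {1..r}" and k: "k < ni l"
    have "(\<integral>x. x ^ k * poly (P n + P ni) x \<partial>\<mu> l) = J (\<mu> l) k (P n) + J (\<mu> l) k (P ni)"
      using J_add[OF mom[OF l]] unfolding J_def by simp
    also have "J (\<mu> l) k (P ni) = 0" using orth[OF niMI l k] .
    also have "J (\<mu> l) k (P n) = 0"
    proof (cases "l = i \<and> k = n i")
      case True then show ?thesis using z by simp
    next
      case False
      then have "k < n l" using k unfolding ni_def addv_apply by (auto split: if_splits)
      then show ?thesis using orth[OF n l] by simp
    qed
    finally show "(\<integral>x. x ^ k * poly (P n + P ni) x \<partial>\<mu> l) = 0" by simp
  qed
  then have "P n + P ni = P ni" using MOP_uniq[OF niMI] by blast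
  then have "P n = 0" by simp
  then show False using lcP[OF n] by simp
qed

lemma rec_int:
  assumes n: "n \<in> MI r" and i: "i \<in> {1..r}" and ni: "1 \<le> n i"
  shows "J (\<mu> i) (n i) (P n) = a n i * J (\<mu> i) (n i - 1) (P (decv n i))"
proof -
  have M: "moment_measure (\<mu> i)" using mom[OF i] .
  have "J (\<mu> i) (n i - 1) (pCons 0 (P n)) = J (\<mu> i) (n i) (P n)"
    using ni by (simp add: J_pCons)
  moreover have "J (\<mu> i) (n i - 1) (pCons 0 (P n)) =
     J (\<mu> i) (n i - 1) (P (addv n (\<ee> i))) + b n i * J (\<mu> i) (n i - 1) (P n)
       + (\<Sum>l\<in>{1..r}. a n l * J (\<mu> i) (n i - 1) (MOP_dec r \<mu> n l))"
    unfolding nn_poly[OF n i] Ls_def by (simp add: J_add[OF M] J_sum[OF M] J_smult)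
  moreover have "J (\<mu> i) (n i - 1) (P (addv n (\<ee> i))) = 0"
    using orth[OF MI_addv[OF n i] i] ni by (simp add: addv_apply)
  moreover have "J (\<mu> i) (n i - 1) (P n) = 0" using orth[OF n i] ni by simp
  moreover have "(\<Sum>l\<in>{1..r}. a n l * J (\<mu> i) (n i - 1) (MOP_dec r \<mu> n l))
      = (\<Sum>l\<in>{1..r}. if l = i then a n i * J (\<mu> i) (n i - 1) (P (decv n i)) else 0)"
  proof (rule sum.cong)
    fix l assume l: "l \<in> {1..r}"
    show "a n l * J (\<mu> i) (n i - 1) (MOP_dec r \<mu> n l)
      = (if l = i then a n i * J (\<mu> i) (n i - 1) (P (decv n i)) else 0)"
    proof (cases "l = i")
      case True then show ?thesis using ni by (simp add: MOP_dec_def)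
    next
      case False
      show ?thesis
      proof (cases "n l = 0")
        case True then show ?thesis using False by (simp add: MOP_dec_def J_zero)
      next
        case nl: False
        have "J (\<mu> i) (n i - 1) (P (decv n l)) = 0"
          using orth[OF MI_decv[OF n] i] False ni by (simp add: decv_apply_other)
        then show ?thesis using False nl by (simp add: MOP_dec_def)
      qed
    qed
  qed simp
  ultimately show ?thesis using i by simp
qed

lemma int_D:
  assumes n: "n \<in> MI r" and i: "i \<in> {1..r}" and j: "j \<in> {1..r}" and ij: "i \<noteq> j"
  shows "J (\<mu> i) (n i) (P (addv n (\<ee> j))) = (b n i - b n j) * J (\<mu> i) (n i) (P n)"
proof -
  have M: "moment_measure (\<mu> i)" using mom[OF i] .
  have "J (\<mu> i) (n i) (P (addv n (\<ee> i))) = 0"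
    using orth[OF MI_addv[OF n i] i] by (simp add: addv_apply)
  then show ?thesis unfolding Dlem[OF n i j] by (simp add: J_add[OF M] J_smult)
qed

lemma rel3:
  assumes n: "n \<in> MI r" and i: "i \<in> {1..r}" and j: "j \<in> {1..r}" and ij: "i \<noteq> j" and ni: "1 \<le> n i"
  shows "a (addv n (\<ee> j)) i / a n i = (b n j - b n i) / (b (decv n i) j - b (decv n i) i)"
proof -
  define m where "m = decv n i"
  define nj where "nj = addv n (\<ee> j)"
  have mMI: "m \<in> MI r" using MI_decv n m_def by auto
  have njMI: "nj \<in> MI r" using MI_addv n j nj_def by auto
  have mi: "m i = n i - 1" using m_def decv_apply_same by simp
  have nji: "nj i = n i" using nj_def ij by (simp add: addv_apply)
  have dnj: "decv nj i = addv m (\<ee> j)" using nj_def m_def decv_addv_other ij by simp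
  have mjMI: "addv m (\<ee> j) \<in> MI r" using MI_addv mMI j by auto
  have mji: "addv m (\<ee> j) i = m i" using ij by (simp add: addv_apply)
  define In where "In = J (\<mu> i) (n i) (P n)"
  define Im where "Im = J (\<mu> i) (n i - 1) (P m)"
  define Imj where "Imj = J (\<mu> i) (n i - 1) (P (addv m (\<ee> j)))"
  have In0: "In \<noteq> 0" using Inz[OF n i] In_def by simp
  have Im0: "Im \<noteq> 0" using Inz[OF mMI i] Im_def mi by simp
  have Imj0: "Imj \<noteq> 0" using Inz[OF mjMI i] Imj_def mji mi by simp
  have h1: "In = a n i * Im" using rec_int[OF n i ni] In_def Im_def m_def by simp
  have h2: "J (\<mu> i) (n i) (P nj) = a nj i * Imj"
    using rec_int[OF njMI i] nji ni dnj Imj_def by simp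
  have h3: "J (\<mu> i) (n i) (P nj) = (b n i - b n j) * In" using int_D[OF n i j ij] nj_def In_def by simp
  have h4: "Imj = (b m i - b m j) * Im" using int_D[OF mMI i j ij] Imj_def Im_def mi by simp
  have ani: "a n i = In / Im" using h1 Im0 by simp
  have anj: "a nj i = (b n i - b n j) * In / Imj" using h2 h3 Imj0 by (simp add: field_simps)
  have bm: "b m i - b m j \<noteq> 0" using h4 Imj0 by auto
  have "a nj i / a n i = (b n i - b n j) / (b m i - b m j)"
    unfolding ani anj h4 using In0 Im0 bm by (simp add: field_simps)
  also have "\<dots> = (b n j - b n i) / (b m j - b m i)"
    by (metis minus_diff_eq minus_divide_divide)
  finally show ?thesis using nj_def m_def by simp
qed

lemma OPeq:
  assumes j: "j \<in> {1..r}"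
  shows "OP (\<mu> j) s = P (scalev s (\<ee> j))"
proof -
  have "is_OP (\<mu> j) s = is_MOP r \<mu> (scalev s (\<ee> j))"
  proof (rule ext)
    fix p
    show "is_OP (\<mu> j) s p = is_MOP r \<mu> (scalev s (\<ee> j)) p"
      unfolding is_OP_def is_MOP_def absv_scalev[OF j] using j by (auto simp: scalev_apply)
  qed
  then show ?thesis unfolding OP_def MOP_def by simp
qed

lemma bnd:
  assumes j: "j \<in> {1..r}" and tt: "TT_rec (\<mu> j) A2 B2"
  shows "b (scalev s (\<ee> j)) j = B2 s \<and> a (scalev s (\<ee> j)) j = (if s = 0 then 0 else A2 s)"
proof -
  define n where "n = scalev s (\<ee> j)"
  have nMI: "n \<in> MI r" using MI_scalev j n_def by auto
  define R where "R = (if s = 0 then 0 else P (scalev (s - 1) (\<ee> j)))"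
  have sn: "addv n (\<ee> j) = scalev (Suc s) (\<ee> j)" unfolding n_def
    by (rule ext) (simp add: addv_apply scalev_apply)
  have dn: "s \<noteq> 0 \<Longrightarrow> decv n j = scalev (s - 1) (\<ee> j)" unfolding n_def
    by (rule ext) (simp add: decv_def scalev_apply)
  have Ls: "Ls n = smult (a n j) R"
  proof -
    have "Ls n = (\<Sum>l\<in>{1..r}. if l = j then smult (a n j) R else 0)"
      unfolding Ls_def
    proof (rule sum.cong)
      fix l assume "l \<in> {1..r}"
      show "smult (a n l) (MOP_dec r \<mu> n l) = (if l = j then smult (a n j) R else 0)"
        using dn by (auto simp: MOP_dec_def R_def n_def scalev_apply)
    qed simp
    then show ?thesis using j by simp
  qed
  have E: "pCons 0 (P n) = P (scalev (Suc s) (\<ee> j)) + smult (b n j) (P n) + smult (a n j) R"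
    using nn_poly[OF nMI j] sn Ls by simp
  have "poly (pCons 0 (P n)) = poly (P (scalev (Suc s) (\<ee> j)) + smult (B2 s) (P n) + smult (A2 s) R)"
  proof
    fix x
    have "x * poly (OP (\<mu> j) s) x = poly (OP (\<mu> j) (Suc s)) x + B2 s * poly (OP (\<mu> j) s) x
       + A2 s * (if s = 0 then 0 else poly (OP (\<mu> j) (s - 1)) x)"
      using tt unfolding TT_rec_def by blast
    then show "poly (pCons 0 (P n)) x = poly (P (scalev (Suc s) (\<ee> j)) + smult (B2 s) (P n) + smult (A2 s) R) x"
      unfolding OPeq[OF j] n_def R_def by simp
  qed
  then have T: "pCons 0 (P n) = P (scalev (Suc s) (\<ee> j)) + smult (B2 s) (P n) + smult (A2 s) R"
    by (simp add: poly_eq_poly_eq_iff)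
  have Z: "smult (b n j - B2 s) (P n) + smult (a n j - A2 s) R = 0"
    using E T by (simp add: smult_diff_left algebra_simps)
  have cR: "coeff R s = 0"
  proof (cases "s = 0")
    case False
    have "scalev (s - 1) (\<ee> j) \<in> MI r" using MI_scalev j by auto
    then show ?thesis using coeffP_high[of "scalev (s - 1) (\<ee> j)" s] False absv_scalev[OF j]
      unfolding R_def by simp
  qed (simp add: R_def)
  have cn: "coeff (P n) s = 1" using coeffP[OF nMI] absv_scalev[OF j] n_def by simp
  have b1: "b n j = B2 s"
    using arg_cong[OF Z, of "\<lambda>p. coeff p s"] cR cn by simp
  have a1: "a n j = (if s = 0 then 0 else A2 s)"
  proof (cases "s = 0")
    case True then show ?thesis using conv[OF nMI j] n_def by (simp add: scalev_apply)
  next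
    case False
    have "scalev (s - 1) (\<ee> j) \<in> MI r" using MI_scalev j by auto
    then have "R \<noteq> 0" using lcP False R_def by fastforce
    then show ?thesis using Z b1 False by simp
  qed
  show ?thesis using a1 b1 n_def by simp
qed

end

theorem theorem3p3:
  fixes r :: nat and \<mu> :: "nat \<Rightarrow> real measure"
    and a b :: "(nat \<Rightarrow> nat) \<Rightarrow> nat \<Rightarrow> real"
    and a2\<mu> b\<mu> :: "nat \<Rightarrow> nat \<Rightarrow> real"
  assumes "r \<ge> 2"
    and "\<forall>i\<in>{1..r}. moment_measure (\<mu> i)"
    and "normal_system r \<mu>"
    and "NN_rec r \<mu> a b"
    and "\<forall>i\<in>{1..r}. TT_rec (\<mu> i) (a2\<mu> i) (b\<mu> i)"
    and "\<forall>n\<in>MI r. \<forall>i\<in>{1..r}. \<forall>j\<in>{1..r}. i \<noteq> j \<longrightarrow> b n i \<noteq> b n j"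
  shows "\<forall>a' b'. (\<forall>n\<in>MI r. \<forall>j\<in>{1..r}. n j = 0 \<longrightarrow> a' n j = 0) \<and> relations_bc r a2\<mu> b\<mu> a' b'
           \<longrightarrow> (\<forall>n\<in>MI r. \<forall>j\<in>{1..r}. a' n j = a n j \<and> b' n j = b n j)"
proof -
  have cv: "\<forall>n\<in>MI r. \<forall>j\<in>{1..r}. n j = 0 \<longrightarrow> a n j = 0"
    using assms(4) unfolding NN_rec_def by blast
  have R: "relations_bc r a2\<mu> b\<mu> a b"
    unfolding relations_bc_def
  proof (intro conjI ballI allI impI)
    fix n i j assume n: "n \<in> MI r" and i: "i \<in> {1..r}" and j: "j \<in> {1..r}" and ij: "i \<noteq> j"
    show "b (addv n (\<ee> i)) j - b n j = b (addv n (\<ee> j)) i - b n i"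
      using rel12(1)[OF assms(2,3,4) n i j ij] .
    show "(\<Sum>k\<in>{1..r}. a (addv n (\<ee> j)) k) - (\<Sum>k\<in>{1..r}. a (addv n (\<ee> i)) k)
          = b (addv n (\<ee> j)) i * b n j - b n i * b (addv n (\<ee> i)) j"
      using rel12(2)[OF assms(2,3,4) n i j ij] .
    assume "1 \<le> n i"
    then show "a (addv n (\<ee> j)) i / a n i = (b n j - b n i) / (b (decv n i) j - b (decv n i) i)"
      using rel3[OF assms(2,3,4) n i j ij] by blast
  next
    fix m j assume j: "j \<in> {1..r}"
    have tt: "TT_rec (\<mu> j) (a2\<mu> j) (b\<mu> j)" using assms(5) j by blast
    show "a (scalev m (\<ee> j)) j = (if m = 0 then 0 else a2\<mu> j m)"
      using bnd[OF assms(2,3,4) j tt] by blast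
    show "b (scalev m (\<ee> j)) j = b\<mu> j m"
      using bnd[OF assms(2,3,4) j tt] by blast
  next
    fix m i j assume i: "i \<in> {1..r}" and j: "j \<in> {1..r}" and ij: "i \<noteq> j"
    show "a (scalev m (\<ee> i)) j = 0"
    proof -
      have "scalev m (\<ee> i) \<in> MI r" using MI_scalev[OF i] .
      moreover have "scalev m (\<ee> i) j = 0" using ij by (simp add: scalev_apply)
      ultimately show ?thesis using cv j by blast
    qed
  qed
  show ?thesis
  proof (intro allI impI)
    fix a' b'
    assume h: "(\<forall>n\<in>MI r. \<forall>j\<in>{1..r}. n j = 0 \<longrightarrow> a' n j = 0) \<and> relations_bc r a2\<mu> b\<mu> a' b'"
    show "\<forall>n\<in>MI r. \<forall>j\<in>{1..r}. a' n j = a n j \<and> b' n j = b n j"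
      using uniq[OF cv _ R _ assms(6)] h by blast
  qed
qed

end
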